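(* Under the standing assumptions of the context, for any real $a<b$, $\|\widehat{\varphi_l}-\widehat{\varphi^M}\|_{C[a,b]}=O(\mu(l))$ as $l\to\infty$, where $\|\cdot\|_{C[a,b]}$ is the sup norm on $[a,b]$.
   Context: Fourier transform: $\widehat f(\omega)=\int_{\mathbb{R}}f(t)e^{-it\omega}\,dt$. Let $\theta$ be odd, non-decreasing, $C^2$, with $\theta(\omega)=\pi/4$ for $\omega>\pi/3$; fix $\pi/3\le\omega_0<\pi/2$. Meyer scaling function: $\widehat{\varphi^M}(\omega)=1$ for $|\omega|\le2\omega_0$, $=\cos(\frac\pi4+\theta(\frac{\pi}{3(\pi-2\omega_0)}(|\omega|-\pi)))$ for $2\omega_0<|\omega|\le2\pi-2\omega_0$, $=0$ otherwise. Meyer mask: $2\pi$-periodic $m^M$ with $m^M(\omega)=\widehat{\varphi^M}(2\omega)$ on $[-\pi,\pi]$. $\|\cdot\|_C$: sup norm on $[-\pi,\pi]$. A linear method of summation $(\lambda_{n,k})$ maps $f$ with Fourier coefficients $a_k,b_k$ to $u_n(f,\omega)=\frac{a_0}2+\sum_{k=1}^n\lambda_{n,k}(a_k\cos k\omega+b_k\sin k\omega)$. $m^M_l:=m^M/(\cos\frac\omega2)^{2l}$. Standing assumptions: a method and a sequence $n(l)$ are fixed with $u_l:=u_{n(l)}(m^M_l,\cdot)$, $u_{1,l}:=u_{n(l)}((m^M_l)',\cdot)$ satisfying $\alpha(l):=\|u_l-m^M_l\|_C=o(l^{-1})$, $\gamma(l):=\|u_{1,l}-(m^M_l)'\|_C=o(1)$,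 $u_l(\pi)\ne0$; $l_0$ is fixed with $\inf_{l\ge l_0}|u_l(0)|>0$ and $l\ge l_0$. $\mu(l):=l\alpha(l)+\gamma(l)$. $m_l(\omega):=(\cos\frac\omega2)^{2l}u_l(\omega)/u_l(0)$, $\widehat{\varphi_l}(\omega):=\prod_{j\ge1}m_l(\omega2^{-j})$. *)

theory Defs
  imports "HOL-Analysis.Analysis" "HOL-Library.Landau_Symbols"
begin

definition C2_fun :: "(real \<Rightarrow> real) \<Rightarrow> bool" where
  "C2_fun f \<longleftrightarrow> (\<exists>f1 f2. (\<forall>x. (f has_real_derivative f1 x) (at x)) \<and>
                            (\<forall>x. (f1 has_real_derivative f2 x) (at x)) \<and>
                            continuous_on UNIV f2)"

definition meyer_phi_hat :: "(real \<Rightarrow> real) \<Rightarrow> real \<Rightarrow> real \<Rightarrow> real" where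
  "meyer_phi_hat \<theta> \<omega>0 \<omega> =
     (if \<bar>\<omega>\<bar> \<le> 2 * \<omega>0 then 1
      else if \<bar>\<omega>\<bar> \<le> 2 * pi - 2 * \<omega>0
        then cos (pi / 4 + \<theta> (pi / (3 * (pi - 2 * \<omega>0)) * (\<bar>\<omega>\<bar> - pi)))
      else 0)"

definition red2pi :: "real \<Rightarrow> real" where
  "red2pi \<omega> = \<omega> - 2 * pi * of_int \<lfloor>(\<omega> + pi) / (2 * pi)\<rfloor>"

definition meyer_mask :: "(real \<Rightarrow> real) \<Rightarrow> real \<Rightarrow> real \<Rightarrow> real" where
  "meyer_mask \<theta> \<omega>0 \<omega> = meyer_phi_hat \<theta> \<omega>0 (2 * red2pi \<omega>)"

(* m^M_l = m^M / (cos(\<omega>/2))^(2l); at the zeros of the cosine m^M vanishes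
   in a neighbourhood, so the value 0 (x/0 = 0) is the continuous extension *)
definition meyer_mask_l :: "(real \<Rightarrow> real) \<Rightarrow> real \<Rightarrow> nat \<Rightarrow> real \<Rightarrow> real" where
  "meyer_mask_l \<theta> \<omega>0 l \<omega> = meyer_mask \<theta> \<omega>0 \<omega> / (cos (\<omega> / 2)) ^ (2 * l)"

definition fourier_a :: "(real \<Rightarrow> real) \<Rightarrow> nat \<Rightarrow> real" where
  "fourier_a f k = integral {-pi..pi} (\<lambda>t. f t * cos (real k * t)) / pi"

definition fourier_b :: "(real \<Rightarrow> real) \<Rightarrow> nat \<Rightarrow> real" where
  "fourier_b f k = integral {-pi..pi} (\<lambda>t. f t * sin (real k * t)) / pi"

definition sum_method :: "(nat \<Rightarrow> nat \<Rightarrow> real) \<Rightarrow> nat \<Rightarrow> (real \<Rightarrow> real) \<Rightarrow> real \<Rightarrow> real" where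
  "sum_method lam n f \<omega> = fourier_a f 0 / 2 +
     (\<Sum>k=1..n. lam n k * (fourier_a f k * cos (real k * \<omega>) + fourier_b f k * sin (real k * \<omega>)))"

definition sup_norm_on :: "real set \<Rightarrow> (real \<Rightarrow> real) \<Rightarrow> real" where
  "sup_norm_on S f = Sup ((\<lambda>\<omega>. \<bar>f \<omega>\<bar>) ` S)"

definition u_l :: "(real \<Rightarrow> real) \<Rightarrow> real \<Rightarrow> (nat \<Rightarrow> nat \<Rightarrow> real) \<Rightarrow> (nat \<Rightarrow> nat) \<Rightarrow> nat \<Rightarrow> real \<Rightarrow> real" where
  "u_l \<theta> \<omega>0 lam nl l = sum_method lam (nl l) (meyer_mask_l \<theta> \<omega>0 l)"

definition u1_l :: "(real \<Rightarrow> real) \<Rightarrow> real \<Rightarrow> (nat \<Rightarrow> nat \<Rightarrow> real) \<Rightarrow> (nat \<Rightarrow> nat) \<Rightarrow> nat \<Rightarrow> real \<Rightarrow> real" where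
  "u1_l \<theta> \<omega>0 lam nl l = sum_method lam (nl l) (deriv (meyer_mask_l \<theta> \<omega>0 l))"

definition alpha_l :: "(real \<Rightarrow> real) \<Rightarrow> real \<Rightarrow> (nat \<Rightarrow> nat \<Rightarrow> real) \<Rightarrow> (nat \<Rightarrow> nat) \<Rightarrow> nat \<Rightarrow> real" where
  "alpha_l \<theta> \<omega>0 lam nl l =
     sup_norm_on {-pi..pi} (\<lambda>\<omega>. u_l \<theta> \<omega>0 lam nl l \<omega> - meyer_mask_l \<theta> \<omega>0 l \<omega>)"

definition gamma_l :: "(real \<Rightarrow> real) \<Rightarrow> real \<Rightarrow> (nat \<Rightarrow> nat \<Rightarrow> real) \<Rightarrow> (nat \<Rightarrow> nat) \<Rightarrow> nat \<Rightarrow> real" where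
  "gamma_l \<theta> \<omega>0 lam nl l =
     sup_norm_on {-pi..pi} (\<lambda>\<omega>. u1_l \<theta> \<omega>0 lam nl l \<omega> - deriv (meyer_mask_l \<theta> \<omega>0 l) \<omega>)"

definition mu_l :: "(real \<Rightarrow> real) \<Rightarrow> real \<Rightarrow> (nat \<Rightarrow> nat \<Rightarrow> real) \<Rightarrow> (nat \<Rightarrow> nat) \<Rightarrow> nat \<Rightarrow> real" where
  "mu_l \<theta> \<omega>0 lam nl l = real l * alpha_l \<theta> \<omega>0 lam nl l + gamma_l \<theta> \<omega>0 lam nl l"

definition mask_m :: "(real \<Rightarrow> real) \<Rightarrow> real \<Rightarrow> (nat \<Rightarrow> nat \<Rightarrow> real) \<Rightarrow> (nat \<Rightarrow> nat) \<Rightarrow> nat \<Rightarrow> real \<Rightarrow> real" where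
  "mask_m \<theta> \<omega>0 lam nl l \<omega> =
     (cos (\<omega> / 2)) ^ (2 * l) * u_l \<theta> \<omega>0 lam nl l \<omega> / u_l \<theta> \<omega>0 lam nl l 0"

definition phi_hat_l :: "(real \<Rightarrow> real) \<Rightarrow> real \<Rightarrow> (nat \<Rightarrow> nat \<Rightarrow> real) \<Rightarrow> (nat \<Rightarrow> nat) \<Rightarrow> nat \<Rightarrow> real \<Rightarrow> real" where
  "phi_hat_l \<theta> \<omega>0 lam nl l \<omega> =
     (\<Prod>j. mask_m \<theta> \<omega>0 lam nl l (\<omega> / 2 ^ (Suc j)))"

end

theory Submission
  imports Defs
begin

locale meyer =
  fixes \<theta> :: "real \<Rightarrow> real" and \<omega>0 :: real and \<theta>1 \<theta>2 :: "real \<Rightarrow> real"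
  assumes odd: "\<forall>x. \<theta> (- x) = - \<theta> x" and mono: "mono \<theta>"
    and d1: "\<And>x. (\<theta> has_real_derivative \<theta>1 x) (at x)"
    and d2: "\<And>x. (\<theta>1 has_real_derivative \<theta>2 x) (at x)"
    and const: "\<forall>x. x > pi / 3 \<longrightarrow> \<theta> x = pi / 4"
    and om1: "pi / 3 \<le> \<omega>0" and om2: "\<omega>0 < pi / 2"
begin

lemma cont_th: "continuous_on UNIV \<theta>"
  by (meson DERIV_isCont continuous_at_imp_continuous_on d1)
lemma cont_th1: "continuous_on UNIV \<theta>1"
  by (meson DERIV_isCont continuous_at_imp_continuous_on d2)

lemma th_pi3: "\<theta> (pi/3) = pi/4"
proof -
  have l: "(\<lambda>n. \<theta> (pi/3 + inverse (real (Suc n)))) \<longlonglongrightarrow> \<theta> (pi/3 + 0)"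
    by (intro isCont_tendsto_compose[OF DERIV_isCont[OF d1]] tendsto_add tendsto_const LIMSEQ_inverse_real_of_nat)
  have e: "\<theta> (pi/3 + inverse (real (Suc n))) = pi/4" for n
  proof -
    have "inverse (real (Suc n)) > 0" by simp
    then show ?thesis using const by (metis less_add_same_cancel1)
  qed
  have "(\<lambda>n. \<theta> (pi/3 + inverse (real (Suc n)))) \<longlonglongrightarrow> pi/4"
    unfolding e by (rule tendsto_const)
  with l show ?thesis using LIMSEQ_unique by fastforce
qed

lemma th_hi: "x \<ge> pi/3 \<Longrightarrow> \<theta> x = pi/4"
proof (cases "x = pi/3")
  case True then show ?thesis using th_pi3 by metis
next
  case False then show "x \<ge> pi/3 \<Longrightarrow> ?thesis" using const by simp
qed
lemma th_lo: "x \<le> -pi/3 \<Longrightarrow> \<theta> x = -pi/4"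
  using th_hi[of "-x"] odd by (metis minus_minus minus_le_iff minus_divide_left)
lemma th_bd: "-pi/4 \<le> \<theta> x \<and> \<theta> x \<le> pi/4"
proof -
  have "\<theta> x \<le> \<theta> (\<bar>x\<bar> + pi/3)" by (rule monoD[OF mono]) (use pi_gt_zero abs_ge_self[of x] in linarith)
  moreover have "\<theta> (-\<bar>x\<bar> - pi/3) \<le> \<theta> x" by (rule monoD[OF mono]) (use pi_gt_zero abs_ge_minus_self[of x] in linarith)
  ultimately show ?thesis using th_hi[of "\<bar>x\<bar> + pi/3"] th_lo[of "-\<bar>x\<bar> - pi/3"] by auto
qed

definition cc where "cc = pi / (3 * (pi - 2 * \<omega>0))"
definition G where "G s = cos (pi/4 + \<theta> (cc * (s - pi)))"
definition Gd where "Gd s = - sin (pi/4 + \<theta> (cc * (s - pi))) * (\<theta>1 (cc * (s - pi)) * cc)"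

lemma cc_pos: "cc > 0" using om2 by (simp add: cc_def)

lemma G_one: "s \<le> 2*\<omega>0 \<Longrightarrow> G s = 1"
proof -
  assume s: "s \<le> 2*\<omega>0"
  have "cc * (s - pi) \<le> cc * (2*\<omega>0 - pi)" using s cc_pos by (intro mult_left_mono) auto
  also have "cc * (2*\<omega>0 - pi) = - pi/3" using om2 by (simp add: cc_def field_simps)
  finally show ?thesis using th_lo unfolding G_def by simp
qed

lemma G_zero: "s \<ge> 2*pi - 2*\<omega>0 \<Longrightarrow> G s = 0"
proof -
  assume s: "s \<ge> 2*pi - 2*\<omega>0"
  have "cc * (s - pi) \<ge> cc * (pi - 2*\<omega>0)" using s cc_pos by (intro mult_left_mono) auto
  moreover have "cc * (pi - 2*\<omega>0) = pi/3" using om2 by (simp add: cc_def field_simps)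
  ultimately have "\<theta> (cc * (s - pi)) = pi/4" using th_hi by simp
  then have "pi/4 + \<theta> (cc * (s - pi)) = pi/2" by simp
  then show ?thesis by (simp only: G_def cos_pi_half)
qed

lemma G_bd: "0 \<le> G s \<and> G s \<le> 1"
proof -
  have "0 \<le> pi/4 + \<theta> (cc * (s - pi))" "pi/4 + \<theta> (cc * (s - pi)) \<le> pi/2" using th_bd[of "cc * (s - pi)"] by auto
  then show ?thesis unfolding G_def by (auto intro!: cos_ge_zero)
qed

lemma G_deriv: "(G has_real_derivative Gd s) (at s)"
proof -
  have "((\<lambda>s. cc * (s - pi)) has_real_derivative cc) (at s)"
    by (auto intro!: derivative_eq_intros)
  from DERIV_chain2[OF d1 this]
  have "((\<lambda>s. \<theta> (cc * (s - pi))) has_real_derivative \<theta>1 (cc * (s - pi)) * cc) (at s)" .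
  from DERIV_cos[THEN DERIV_chain2, OF DERIV_add[OF DERIV_const this]]
  show ?thesis unfolding G_def Gd_def by simp
qed

lemma phi_eq: "meyer_phi_hat \<theta> \<omega>0 s = G s * G (-s)"
proof -
  have G_abs: "G \<bar>s\<bar> = G s * G (-s)"
  proof (cases "s \<ge> 0")
    case True
    then have "G (-s) = 1" using om1 pi_gt_zero by (intro G_one) linarith
    then show ?thesis using True by simp
  next
    case False
    then have "G s = 1" using om1 pi_gt_zero by (intro G_one) linarith
    then show ?thesis using False by simp
  qed
  have "meyer_phi_hat \<theta> \<omega>0 s = G \<bar>s\<bar>"
  proof -
    have "cos (pi / 4 + \<theta> (pi / (3 * (pi - 2 * \<omega>0)) * (\<bar>s\<bar> - pi))) = G \<bar>s\<bar>"
      by (simp add: G_def cc_def)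
    then show ?thesis unfolding meyer_phi_hat_def
      using G_one[of "\<bar>s\<bar>"] G_zero[of "\<bar>s\<bar>"] by (simp split: if_split)
  qed
  then show ?thesis using G_abs by simp
qed

lemma phi_one: "\<bar>s\<bar> \<le> 2*\<omega>0 \<Longrightarrow> meyer_phi_hat \<theta> \<omega>0 s = 1"
  by (simp add: meyer_phi_hat_def)
lemma phi_zero: "\<bar>s\<bar> \<ge> 2*pi - 2*\<omega>0 \<Longrightarrow> meyer_phi_hat \<theta> \<omega>0 s = 0"
  using G_zero[of s] G_zero[of "-s"] phi_eq by (cases "s \<ge> 0") auto
lemma phi_bd: "0 \<le> meyer_phi_hat \<theta> \<omega>0 s \<and> meyer_phi_hat \<theta> \<omega>0 s \<le> 1"
  using G_bd[of s] G_bd[of "-s"] phi_eq by (simp add: mult_le_one)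

end

context meyer begin

abbreviation "phi \<equiv> meyer_phi_hat \<theta> \<omega>0"
abbreviation "mk \<equiv> meyer_mask \<theta> \<omega>0"
definition C :: "nat \<Rightarrow> real \<Rightarrow> real" where "C l x = cos (x/2) ^ (2*l)"
abbreviation "M \<equiv> meyer_mask_l \<theta> \<omega>0"

lemma phi_even: "phi (-s) = phi s" unfolding meyer_phi_hat_def by (simp only: abs_minus_cancel)

lemma cos_per: "cos ((x::real) - 2*pi* of_int (n::int)) = cos x" and sin_per: "sin ((x::real) - 2*pi* of_int (n::int)) = sin x"
  using sin_cos_eq_iff[of "x - 2*pi* of_int n" x] by (auto intro: exI[of _ "-n"])

lemma red_id: "-pi \<le> y \<Longrightarrow> y < pi \<Longrightarrow> red2pi y = y"
proof -
  assume "-pi \<le> y" "y < pi"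
  then have "\<lfloor>(y + pi) / (2*pi)\<rfloor> = 0" by (intro floor_unique) (auto simp: field_simps)
  then show ?thesis by (simp add: red2pi_def)
qed

lemma red_range: "-pi \<le> red2pi x \<and> red2pi x < pi"
proof -
  define q where "q = (x + pi) / (2*pi)"
  have "of_int \<lfloor>q\<rfloor> \<le> q" "q < of_int \<lfloor>q\<rfloor> + 1" by linarith+
  then have "2*pi* of_int \<lfloor>q\<rfloor> \<le> 2*pi*q" "2*pi*q < 2*pi*(of_int \<lfloor>q\<rfloor> + 1)"
    by (intro mult_left_mono mult_strict_left_mono; simp)+
  moreover have "2*pi*q = x + pi" by (simp add: q_def)
  ultimately have "2*pi* of_int \<lfloor>q\<rfloor> \<le> x + pi" "x + pi < 2*pi*(of_int \<lfloor>q\<rfloor> + 1)" by simp_all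
  then show ?thesis unfolding red2pi_def q_def[symmetric] by (auto simp: algebra_simps)
qed

lemma red_form: "\<exists>n::int. red2pi x = x - 2*pi* of_int n"
  by (auto simp: red2pi_def)

lemma maskP: assumes "-pi \<le> x - 2*pi* of_int n" "x - 2*pi* of_int n \<le> pi"
  shows "mk x = phi (2*(x - 2*pi* of_int n))"
proof (cases "x - 2*pi* of_int n < pi")
  case True
  have "\<lfloor>(x + pi) / (2*pi)\<rfloor> = n"
    using assms True by (intro floor_unique) (auto simp: field_simps)
  then show ?thesis by (simp add: meyer_mask_def red2pi_def)
next
  case False
  then have e: "x - 2*pi* of_int n = pi" using assms by simp
  have "\<lfloor>(x + pi) / (2*pi)\<rfloor> = n + 1"
    using e by (intro floor_unique) (auto simp: field_simps)
  then have "red2pi x = -pi" using e by (simp add: red2pi_def algebra_simps)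
  moreover have "phi (2*pi) = 0" "phi (-2*pi) = 0" using om1 om2 pi_gt_zero by (auto intro!: phi_zero)
  ultimately show ?thesis using e by (simp add: meyer_mask_def)
qed

lemma mk_red: "mk x = phi (2 * red2pi x)" by (simp add: meyer_mask_def)

lemma mk_bd: "0 \<le> mk x \<and> mk x \<le> 1" using phi_bd by (simp add: meyer_mask_def)

lemma C_cos: "C l x = ((1 + cos x)/2)^l"
proof -
  have "cos x = 2 * cos (x/2)^2 - 1" using cos_double_cos[of "x/2"] by simp
  then have e: "cos (x/2)^2 = (1 + cos x)/2" by simp
  show ?thesis by (simp only: C_def power_mult e)
qed

lemma C_per: "C l (x - 2*pi* of_int n) = C l x" by (simp add: C_cos cos_per)

lemma C_bd: "0 \<le> C l x \<and> C l x \<le> 1"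
proof -
  have "0 \<le> 1 + cos x" using cos_ge_minus_one[of x] by linarith
  then have a: "0 \<le> (1 + cos x)/2" by simp
  have "1 + cos x \<le> 2" using cos_le_one[of x] by linarith
  then have b: "(1 + cos x)/2 \<le> 1" by simp
  show ?thesis unfolding C_cos using a b by (simp add: power_le_one)
qed

lemma C_pos: "\<bar>x\<bar> < pi \<Longrightarrow> C l x > 0"
  unfolding C_def by (intro zero_less_power cos_gt_zero_pi) auto

lemma mk_CM: "mk x = C l x * M l x"
proof (cases "C l x = 0")
  case False then show ?thesis by (simp add: meyer_mask_l_def C_def)
next
  case True
  obtain n where n: "red2pi x = x - 2*pi* of_int n" using red_form by blast
  define y where "y = red2pi x"
  have "mk x = 0"
  proof (rule ccontr)
    assume "mk x \<noteq> 0"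
    then have "phi (2*y) \<noteq> 0" by (simp add: mk_red y_def)
    then have "\<bar>2*y\<bar> < 2*pi - 2*\<omega>0" using phi_zero by force
    then have "\<bar>y\<bar> < pi" using om1 by simp
    then have "C l y > 0" by (rule C_pos)
    then show False using True C_per[of l x n] n y_def by simp
  qed
  then show ?thesis using True by simp
qed

lemma scaling: "phi (2*y) = mk y * phi y"
proof (cases "\<bar>y\<bar> \<le> 2*\<omega>0")
  case True
  then have "phi y = 1" by (rule phi_one)
  moreover have "mk y = phi (2*y)" using maskP[of y 0] True om2 by simp
  ultimately show ?thesis by simp
next
  case False
  have l: "phi (2*y) = 0" using False om1 by (intro phi_zero) auto
  show ?thesis
  proof (cases "\<bar>y\<bar> \<ge> 2*pi - 2*\<omega>0")
    case True then show ?thesis using l phi_zero by simp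
  next
    case F2: False
    have "mk y = 0"
    proof (cases "\<bar>y\<bar> \<le> pi")
      case True
      then have "mk y = phi (2*y)" using maskP[of y 0] by simp
      then show ?thesis using l by simp
    next
      case F3: False
      show ?thesis
      proof (cases "y > 0")
        case True
        then have "mk y = phi (2*(y - 2*pi* of_int 1))" using F2 F3 om1 om2
          by (intro maskP) auto
        also have "\<dots> = 0" using True F2 F3 False om1 by (intro phi_zero) auto
        finally show ?thesis .
      next
        case False
        then have "mk y = phi (2*(y - 2*pi* of_int (-1)))" using F2 F3 om1 om2
          by (intro maskP) auto
        also have "\<dots> = 0" using False F2 F3 \<open>\<not> \<bar>y\<bar> \<le> 2*\<omega>0\<close> om1 by (intro phi_zero) auto
        finally show ?thesis .
      qed
    qed
    then show ?thesis using l by simp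
  qed
qed

lemma phi_partial: "phi w = (\<Prod>j<N. mk (w / 2^(Suc j))) * phi (w / 2^N)"
proof (induction N)
  case 0 then show ?case by simp
next
  case (Suc N)
  have "phi (w / 2^N) = phi (2 * (w / 2^(Suc N)))" by simp
  also have "\<dots> = mk (w / 2^(Suc N)) * phi (w / 2^(Suc N))" by (rule scaling)
  finally show ?case using Suc by (simp add: mult.assoc)
qed

end

lemma fourier_deriv:
  fixes f Df :: "real \<Rightarrow> real"
  assumes d: "\<And>x. x \<in> {-pi..pi} \<Longrightarrow> (f has_real_derivative Df x) (at x)"
    and per: "f (-pi) = f pi"
  shows "fourier_a (deriv f) k = real k * fourier_b f k"
    and "fourier_b (deriv f) k = - real k * fourier_a f k"
proof -
  have cf: "continuous_on {-pi..pi} f"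
    using d by (meson DERIV_isCont continuous_at_imp_continuous_on)
  have dw: "\<And>x. x \<in> {-pi..pi} \<Longrightarrow> (f has_real_derivative Df x) (at x within {-pi..pi})"
    using d has_field_derivative_at_within by blast
  have dv: "\<And>x. x \<in> {-pi..pi} \<Longrightarrow> deriv f x = Df x" using d DERIV_imp_deriv by blast
  have ints: "(\<lambda>t. f t * sin (real k * t)) integrable_on {-pi..pi}"
    by (intro integrable_continuous_interval continuous_intros cf)
  have intc: "(\<lambda>t. f t * cos (real k * t)) integrable_on {-pi..pi}"
    by (intro integrable_continuous_interval continuous_intros cf)
  have h1: "((\<lambda>t. Df t * cos (real k * t) + f t * (- sin (real k * t) * real k)) has_integral
            (f pi * cos (real k * pi) - f (-pi) * cos (real k * (-pi)))) {-pi..pi}"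
    by (intro fundamental_theorem_of_calculus)
       (auto intro!: derivative_eq_intros dw simp: has_real_derivative_iff_has_vector_derivative[symmetric]
             intro: DERIV_subset)
  have z1: "f pi * cos (real k * pi) - f (-pi) * cos (real k * (-pi)) = 0" using per by simp
  have "((\<lambda>t. (Df t * cos (real k * t) + f t * (- sin (real k * t) * real k))
          + real k * (f t * sin (real k * t))) has_integral
          (0 + real k * integral {-pi..pi} (\<lambda>t. f t * sin (real k * t)))) {-pi..pi}"
    using h1 z1 by (intro has_integral_add has_integral_mult_right integrable_integral ints) auto
  then have "((\<lambda>t. Df t * cos (real k * t)) has_integral
          (real k * integral {-pi..pi} (\<lambda>t. f t * sin (real k * t)))) {-pi..pi}"
    by (simp add: algebra_simps)
  then have "integral {-pi..pi} (\<lambda>t. deriv f t * cos (real k * t)) =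
        real k * integral {-pi..pi} (\<lambda>t. f t * sin (real k * t))"
    using dv by (subst integral_cong[where g = "\<lambda>t. Df t * cos (real k * t)"]) (auto dest: integral_unique)
  then show "fourier_a (deriv f) k = real k * fourier_b f k"
    by (simp add: fourier_a_def fourier_b_def)
  have h2: "((\<lambda>t. Df t * sin (real k * t) + f t * (cos (real k * t) * real k)) has_integral
            (f pi * sin (real k * pi) - f (-pi) * sin (real k * (-pi)))) {-pi..pi}"
    by (intro fundamental_theorem_of_calculus)
       (auto intro!: derivative_eq_intros dw simp: has_real_derivative_iff_has_vector_derivative[symmetric]
             intro: DERIV_subset)
  have z2: "f pi * sin (real k * pi) - f (-pi) * sin (real k * (-pi)) = 0" using per
    by (simp add: sin_zero_iff_int2)
  have "((\<lambda>t. (Df t * sin (real k * t) + f t * (cos (real k * t) * real k))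
          - real k * (f t * cos (real k * t))) has_integral
          (0 - real k * integral {-pi..pi} (\<lambda>t. f t * cos (real k * t)))) {-pi..pi}"
    using h2 z2 by (intro has_integral_diff has_integral_mult_right integrable_integral intc) auto
  then have "((\<lambda>t. Df t * sin (real k * t)) has_integral
          (- real k * integral {-pi..pi} (\<lambda>t. f t * cos (real k * t)))) {-pi..pi}"
    by (simp add: algebra_simps)
  then have "integral {-pi..pi} (\<lambda>t. deriv f t * sin (real k * t)) =
        - real k * integral {-pi..pi} (\<lambda>t. f t * cos (real k * t))"
    using dv by (subst integral_cong[where g = "\<lambda>t. Df t * sin (real k * t)"]) (auto dest: integral_unique)
  then show "fourier_b (deriv f) k = - real k * fourier_a f k"
    by (simp add: fourier_a_def fourier_b_def)
qed

lemma sm_deriv: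
  fixes f Df :: "real \<Rightarrow> real"
  assumes d: "\<And>x. x \<in> {-pi..pi} \<Longrightarrow> (f has_real_derivative Df x) (at x)"
    and per: "f (-pi) = f pi"
  shows "(sum_method lam n f has_real_derivative sum_method lam n (deriv f) w) (at w)"
proof -
  have "(sum_method lam n f has_real_derivative
     (\<Sum>k=1..n. lam n k * (fourier_a f k * (- sin (real k * w) * real k) + fourier_b f k * (cos (real k * w) * real k)))) (at w)"
    unfolding sum_method_def[abs_def] by (auto intro!: derivative_eq_intros sum.cong simp: algebra_simps)
  moreover have "(\<Sum>k=1..n. lam n k * (fourier_a f k * (- sin (real k * w) * real k) + fourier_b f k * (cos (real k * w) * real k)))
     = (\<Sum>k=1..n. lam n k * (fourier_a (deriv f) k * cos (real k * w) + fourier_b (deriv f) k * sin (real k * w)))"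
    by (rule sum.cong[OF refl], simp only: fourier_deriv[OF d per], simp add: algebra_simps)
  moreover have "fourier_a (deriv f) 0 = 0" using fourier_deriv(1)[OF d per, of 0] by simp
  ultimately show ?thesis unfolding sum_method_def by simp
qed


context meyer begin

lemma cont_th_i[continuous_intros]: "continuous_on S f \<Longrightarrow> continuous_on S (\<lambda>x. \<theta> (f x))"
  by (rule continuous_on_compose2[OF cont_th]) auto
lemma cont_th1_i[continuous_intros]: "continuous_on S f \<Longrightarrow> continuous_on S (\<lambda>x. \<theta>1 (f x))"
  by (rule continuous_on_compose2[OF cont_th1]) auto

definition P where "P x = G (2*x) * G (-2*x)"
definition Pd where "Pd x = 2 * Gd (2*x) * G (-2*x) - 2 * G (2*x) * Gd (-2*x)"
definition Cd :: "nat \<Rightarrow> real \<Rightarrow> real" where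
  "Cd l x = real l * ((1 + cos x)/2)^(l-1) * (- sin x / 2)"
definition F where "F l x = P x / C l x"
definition Fd where "Fd l x = (Pd x * C l x - P x * Cd l x) / (C l x * C l x)"
definition DM where "DM l x = (if \<bar>x\<bar> < pi then Fd l x else 0)"

lemma P_phi: "P x = phi (2*x)" by (simp add: P_def phi_eq)

lemma G_lin_deriv: "((\<lambda>x. G (c*x)) has_real_derivative Gd (c*x) * c) (at x)"
proof -
  have "((\<lambda>x. c*x) has_real_derivative c) (at x)" by (auto intro!: derivative_eq_intros)
  from DERIV_chain2[OF G_deriv this] show ?thesis .
qed

lemma P_deriv: "(P has_real_derivative Pd x) (at x)"
proof -
  have e: "P = (\<lambda>x. G (2*x) * G ((-2)*x))" by (rule ext) (simp add: P_def)
  show ?thesis unfolding e Pd_def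
    using DERIV_mult[OF G_lin_deriv[of 2 x] G_lin_deriv[of "-2" x]] by (simp add: algebra_simps)
qed

lemma C_deriv: "(C l has_real_derivative Cd l x) (at x)"
proof -
  have "C l = (\<lambda>x. ((1 + cos x)/2)^l)" by (rule ext) (simp add: C_cos)
  then show ?thesis unfolding Cd_def by (auto intro!: derivative_eq_intros)
qed

lemma M_F: "\<bar>x\<bar> < pi \<Longrightarrow> M l x = F l x"
proof -
  assume x: "\<bar>x\<bar> < pi"
  have "mk x = phi (2*x)" using maskP[of x 0] x by simp
  then show ?thesis by (simp add: meyer_mask_l_def F_def P_phi C_def)
qed

lemma P_zero: "\<bar>x\<bar> \<ge> pi - \<omega>0 \<Longrightarrow> P x = 0"
  using phi_zero[of "2*x"] by (simp add: P_phi)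

lemma M_zero: assumes "pi - \<omega>0 < \<bar>x\<bar>" "\<bar>x\<bar> < pi + \<omega>0" shows "M l x = 0"
proof -
  have "mk x = 0"
  proof (cases "\<bar>x\<bar> \<le> pi")
    case True
    then have "mk x = phi (2*(x - 2*pi* of_int 0))" by (intro maskP) auto
    then show ?thesis using phi_zero[of "2*x"] assms by simp
  next
    case False
    show ?thesis
    proof (cases "x > 0")
      case True
      then have "mk x = phi (2*(x - 2*pi* of_int 1))" using False assms om2
        by (intro maskP) auto
      also have "\<dots> = 0" using True False assms om2 by (intro phi_zero) auto
      finally show ?thesis .
    next
      case F2: False
      then have "mk x = phi (2*(x - 2*pi* of_int (-1)))" using False assms om2
        by (intro maskP) auto
      also have "\<dots> = 0" using F2 False assms om2 by (intro phi_zero) auto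
      finally show ?thesis .
    qed
  qed
  then show ?thesis by (simp add: meyer_mask_l_def)
qed

lemma M_zero1: "pi - \<omega>0 < x \<Longrightarrow> x < pi + \<omega>0 \<Longrightarrow> M l x = 0"
  using om1 om2 pi_gt_zero by (intro M_zero) auto
lemma M_zero2: "-pi - \<omega>0 < x \<Longrightarrow> x < -pi + \<omega>0 \<Longrightarrow> M l x = 0"
  using om1 om2 pi_gt_zero by (intro M_zero) auto

lemma F_deriv: "\<bar>x\<bar> < pi \<Longrightarrow> (F l has_real_derivative Fd l x) (at x)"
  unfolding F_def[abs_def] Fd_def
  by (rule DERIV_divide[OF P_deriv C_deriv]) (use C_pos[of x l] in auto)

lemma M_deriv: assumes "\<bar>x\<bar> \<le> pi" shows "(M l has_real_derivative DM l x) (at x)"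
proof (cases "\<bar>x\<bar> < pi")
  case True
  have e: "DM l x = Fd l x" using True by (simp add: DM_def)
  show ?thesis unfolding e using True
    by (intro has_field_derivative_transform_within_open[OF F_deriv[OF True], of "{-pi<..<pi}"])
       (auto simp: M_F)
next
  case False
  then have x: "\<bar>x\<bar> = pi" using assms by simp
  have e: "DM l x = 0" using False by (simp add: DM_def)
  have z: "((\<lambda>_. 0::real) has_real_derivative 0) (at x)" by simp
  show ?thesis
  proof (cases "x > 0")
    case True
    then have "x = pi" using x by simp
    then show ?thesis unfolding e using om1 om2
      by (intro has_field_derivative_transform_within_open[OF z, of "{pi-\<omega>0<..<pi+\<omega>0}"])
         (auto simp: M_zero1)
  next
    case F2: False
    then have "x = -pi" using x by simp
    then show ?thesis unfolding e using om1 om2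
      by (intro has_field_derivative_transform_within_open[OF z, of "{-pi-\<omega>0<..<-pi+\<omega>0}"])
         (auto simp: M_zero2)
  qed
qed

lemma Fd_zero: assumes "pi - \<omega>0 < \<bar>x\<bar>" "\<bar>x\<bar> < pi" shows "Fd l x = 0"
proof -
  have z: "((\<lambda>_. 0::real) has_real_derivative 0) (at x)" by simp
  have "(F l has_real_derivative 0) (at x)"
  proof (cases "x > 0")
    case True
    then show ?thesis using assms
      by (intro has_field_derivative_transform_within_open[OF z, of "{pi-\<omega>0<..<pi}"])
         (auto simp: F_def P_zero)
  next
    case False
    then show ?thesis using assms
      by (intro has_field_derivative_transform_within_open[OF z, of "{-pi<..<-pi+\<omega>0}"])
         (auto simp: F_def P_zero)
  qed
  then show ?thesis using F_deriv[of x l] assms DERIV_unique by force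
qed

end

context meyer begin
lemma cG: "continuous_on UNIV G"
  using G_deriv by (intro continuous_at_imp_continuous_on ballI DERIV_isCont) auto
lemma cGd: "continuous_on UNIV Gd"
  unfolding Gd_def[abs_def] by (intro continuous_intros)
lemma cC: "continuous_on UNIV (C l)"
  using C_deriv by (intro continuous_at_imp_continuous_on ballI DERIV_isCont) auto
lemma cCd: "continuous_on UNIV (Cd l)"
  unfolding Cd_def[abs_def] by (intro continuous_intros) auto
lemma cG_i[continuous_intros]: "continuous_on S f \<Longrightarrow> continuous_on S (\<lambda>x. G (f x))"
  by (rule continuous_on_compose2[OF cG]) auto
lemma cGd_i[continuous_intros]: "continuous_on S f \<Longrightarrow> continuous_on S (\<lambda>x. Gd (f x))"
  by (rule continuous_on_compose2[OF cGd]) auto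
lemma cC_i[continuous_intros]: "continuous_on S f \<Longrightarrow> continuous_on S (\<lambda>x. C l (f x))"
  by (rule continuous_on_compose2[OF cC]) auto
lemma cCd_i[continuous_intros]: "continuous_on S f \<Longrightarrow> continuous_on S (\<lambda>x. Cd l (f x))"
  by (rule continuous_on_compose2[OF cCd]) auto

lemma Fd_cont: "continuous_on {-(pi-\<omega>0)..pi-\<omega>0} (Fd l)"
proof -
  have nz: "C l x * C l x \<noteq> 0" if "x \<in> {-(pi-\<omega>0)..pi-\<omega>0}" for x
  proof -
    from that have "-(pi-\<omega>0) \<le> x" "x \<le> pi-\<omega>0" by auto
    then have "\<bar>x\<bar> < pi" using om1 pi_gt_zero by linarith
    then show ?thesis using C_pos[of x l] by simp
  qed
  have cP: "continuous_on UNIV P" unfolding P_def[abs_def] by (intro continuous_intros)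
  have cPd: "continuous_on UNIV Pd" unfolding Pd_def[abs_def] by (intro continuous_intros)
  have e: "Fd l = (\<lambda>x. (Pd x * C l x - P x * Cd l x) / (C l x * C l x))"
    by (rule ext) (simp add: Fd_def)
  show ?thesis unfolding e
    apply (rule continuous_on_divide)
      apply (intro continuous_on_diff continuous_on_mult continuous_on_subset[OF cP]
         continuous_on_subset[OF cPd] continuous_on_subset[OF cC] continuous_on_subset[OF cCd] subset_UNIV)
     apply (intro continuous_on_mult continuous_on_subset[OF cC] subset_UNIV)
    using nz by blast

qed

lemma DM_bound: "\<exists>B. \<forall>x\<in>{-pi..pi}. \<bar>DM l x\<bar> \<le> B"
proof -
  have "compact (Fd l ` {-(pi-\<omega>0)..pi-\<omega>0})"
    by (intro compact_continuous_image Fd_cont) auto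
  then obtain B where B: "\<And>x. x \<in> {-(pi-\<omega>0)..pi-\<omega>0} \<Longrightarrow> \<bar>Fd l x\<bar> \<le> B"
    using compact_imp_bounded[THEN bounded_iff[THEN iffD1]] by fastforce
  have "\<bar>DM l x\<bar> \<le> max B 0" if "x \<in> {-pi..pi}" for x
  proof (cases "\<bar>x\<bar> \<le> pi - \<omega>0")
    case True
    then have "x \<in> {-(pi-\<omega>0)..pi-\<omega>0}" by (auto simp: abs_le_iff)
    then have "\<bar>Fd l x\<bar> \<le> B" by (rule B)
    then show ?thesis by (auto simp: DM_def)
  next
    case False then show ?thesis using Fd_zero[of x l] by (auto simp: DM_def)
  qed
  then show ?thesis by blast
qed

lemma M_cont: "continuous_on {-pi..pi} (M l)"
  by (intro continuous_at_imp_continuous_on ballI DERIV_isCont[OF M_deriv]) auto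

lemma M_pi: "M l (-pi) = M l pi"
proof -
  have "mk pi = phi (2*(pi - 2*pi* of_int 0))" by (intro maskP) auto
  moreover have "mk (-pi) = phi (2*(-pi - 2*pi* of_int 0))" by (intro maskP) auto
  ultimately show ?thesis by (simp add: meyer_mask_l_def phi_even)
qed

lemma deriv_M: "x \<in> {-pi..pi} \<Longrightarrow> deriv (M l) x = DM l x"
proof -
  assume "x \<in> {-pi..pi}"
  then have "\<bar>x\<bar> \<le> pi" by auto
  then show ?thesis by (rule DERIV_imp_deriv[OF M_deriv])
qed

end

lemma sup_norm_ge:
  assumes B: "\<And>x. x \<in> S \<Longrightarrow> \<bar>f x\<bar> \<le> B" and x: "x \<in> S"
  shows "\<bar>f x\<bar> \<le> sup_norm_on S f"
proof -
  have "bdd_above ((\<lambda>x. \<bar>f x\<bar>) ` S)" using B by (rule bdd_aboveI2)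
  then show ?thesis unfolding sup_norm_on_def by (rule cSup_upper[OF imageI[OF x]])
qed

lemma sup_norm_le:
  assumes "S \<noteq> {}" and B: "\<And>x. x \<in> S \<Longrightarrow> \<bar>f x\<bar> \<le> B"
  shows "sup_norm_on S f \<le> B"
  unfolding sup_norm_on_def using assms by (intro cSup_least) blast+

lemma cont_bound:
  assumes "continuous_on S f" "compact S" shows "\<exists>B. \<forall>x\<in>S. \<bar>f x :: real\<bar> \<le> B"
proof -
  have "bounded (f ` S)" by (intro compact_imp_bounded compact_continuous_image assms)
  then obtain B where "\<forall>y\<in>f ` S. norm y \<le> B" unfolding bounded_iff by blast
  then show ?thesis by auto
qed

lemma prod_diff:
  fixes p q e :: "nat \<Rightarrow> real"
  assumes q: "\<And>j. \<bar>q j\<bar> \<le> 1" and pq: "\<And>j. \<bar>p j - q j\<bar> \<le> e j"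
  shows "\<bar>(\<Prod>j<N. p j) - (\<Prod>j<N. q j)\<bar> \<le> (\<Prod>j<N. 1 + e j) - 1"
proof -
  have e0: "0 \<le> e j" for j using pq[of j] by linarith
  have pb: "\<bar>p j\<bar> \<le> 1 + e j" for j using q[of j] pq[of j] by linarith
  have P: "\<bar>\<Prod>j<N. p j\<bar> \<le> (\<Prod>j<N. 1 + e j)" for N
    unfolding abs_prod by (intro prod_mono) (auto simp: pb)
  show ?thesis
  proof (induction N)
    case 0 then show ?case by simp
  next
    case (Suc N)
    have eq: "(\<Prod>j<Suc N. p j) - (\<Prod>j<Suc N. q j) =
          (\<Prod>j<N. p j) * (p N - q N) + ((\<Prod>j<N. p j) - (\<Prod>j<N. q j)) * q N"
      by (simp add: algebra_simps)
    have tri: "\<bar>(\<Prod>j<N. p j) * (p N - q N) + ((\<Prod>j<N. p j) - (\<Prod>j<N. q j)) * q N\<bar> \<le> \<bar>\<Prod>j<N. p j\<bar> * \<bar>p N - q N\<bar> + \<bar>(\<Prod>j<N. p j) - (\<Prod>j<N. q j)\<bar> * \<bar>q N\<bar>"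
      by (metis abs_mult abs_triangle_ineq)
    have g1: "1 \<le> (\<Prod>j<N. 1 + e j)" by (rule prod_ge_1) (simp add: e0)
    have m1: "\<bar>\<Prod>j<N. p j\<bar> * \<bar>p N - q N\<bar> \<le> (\<Prod>j<N. 1 + e j) * e N"
      by (rule mult_mono[OF P pq]) (use g1 in auto)
    have m2: "\<bar>(\<Prod>j<N. p j) - (\<Prod>j<N. q j)\<bar> * \<bar>q N\<bar> \<le> ((\<Prod>j<N. 1 + e j) - 1) * 1"
      by (rule mult_mono[OF Suc q]) (use g1 in auto)
    have fin: "(\<Prod>j<N. 1 + e j) * e N + ((\<Prod>j<N. 1 + e j) - 1) * 1 = (\<Prod>j<Suc N. 1 + e j) - 1"
      by (simp add: algebra_simps)
    show ?case using eq tri m1 m2 fin by linarith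
  qed
qed

lemma prod_exp:
  fixes e :: "nat \<Rightarrow> real"
  assumes "\<And>j. 0 \<le> e j"
  shows "(\<Prod>j<N. 1 + e j) \<le> exp (\<Sum>j<N. e j)"
  unfolding exp_sum[OF finite_lessThan]
  by (intro prod_mono) (use assms in \<open>auto simp: exp_ge_add_one_self add_nonneg_nonneg\<close>)

lemma exp_minus_one: "0 \<le> (s::real) \<Longrightarrow> exp s - 1 \<le> s * exp s"
proof -
  assume s: "0 \<le> s"
  have "1 - s \<le> exp (-s)" using exp_ge_add_one_self[of "-s"] by simp
  then have "(1 - s) * exp s \<le> exp (-s) * exp s" by (intro mult_right_mono) auto
  then show ?thesis by (simp add: exp_minus field_simps)
qed

context meyer begin

abbreviation "U lam nl l \<equiv> u_l \<theta> \<omega>0 lam nl l"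
abbreviation "U1 lam nl l \<equiv> u1_l \<theta> \<omega>0 lam nl l"

lemma U_deriv: "(U lam nl l has_real_derivative U1 lam nl l x) (at x)"
  unfolding u_l_def u1_l_def
  by (rule sm_deriv) (auto simp: M_pi intro!: M_deriv)

lemma U_cont: "continuous_on S (U lam nl l)"
  using U_deriv by (intro continuous_at_imp_continuous_on ballI DERIV_isCont) auto

lemma U1_cont: "continuous_on S (U1 lam nl l)"
  unfolding u1_l_def sum_method_def[abs_def] by (intro continuous_intros)

lemma U_per: "U lam nl l (x - 2*pi* of_int n) = U lam nl l x"
proof -
  have e: "real k * (x - 2*pi* of_int n) = real k * x - 2*pi* of_int (int k * n)" for k
    by (simp add: algebra_simps)
  have c: "cos (real k * (x - 2*pi* of_int n)) = cos (real k * x)" for k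
    by (subst e, rule cos_per)
  have s: "sin (real k * (x - 2*pi* of_int n)) = sin (real k * x)" for k
    by (subst e, rule sin_per)
  show ?thesis unfolding u_l_def sum_method_def by (simp only: c s)
qed

lemma alpha_bound: "x \<in> {-pi..pi} \<Longrightarrow> \<bar>U lam nl l x - M l x\<bar> \<le> alpha_l \<theta> \<omega>0 lam nl l"
proof -
  assume x: "x \<in> {-pi..pi}"
  have "continuous_on {-pi..pi} (\<lambda>x. U lam nl l x - M l x)"
    by (intro continuous_intros U_cont M_cont)
  then obtain B where "\<forall>x\<in>{-pi..pi}. \<bar>U lam nl l x - M l x\<bar> \<le> B"
    using cont_bound by blast
  then show ?thesis unfolding alpha_l_def using x by (intro sup_norm_ge) auto
qed

lemma gamma_bound: "x \<in> {-pi..pi} \<Longrightarrow> \<bar>U1 lam nl l x - deriv (M l) x\<bar> \<le> gamma_l \<theta> \<omega>0 lam nl l"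
proof -
  assume x: "x \<in> {-pi..pi}"
  obtain B1 where B1: "\<forall>x\<in>{-pi..pi}. \<bar>U1 lam nl l x\<bar> \<le> B1"
    using cont_bound[OF U1_cont] by blast
  obtain B2 where B2: "\<forall>x\<in>{-pi..pi}. \<bar>DM l x\<bar> \<le> B2" using DM_bound by blast
  have "\<bar>U1 lam nl l y - deriv (M l) y\<bar> \<le> B1 + B2" if "y \<in> {-pi..pi}" for y
  proof -
    have "\<bar>U1 lam nl l y\<bar> \<le> B1" "\<bar>DM l y\<bar> \<le> B2" using B1 B2 that by auto
    moreover have "\<bar>U1 lam nl l y - DM l y\<bar> \<le> \<bar>U1 lam nl l y\<bar> + \<bar>DM l y\<bar>" by (rule abs_triangle_ineq4)
    ultimately show ?thesis using deriv_M[OF that] by simp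
  qed
  then show ?thesis unfolding gamma_l_def using x by (intro sup_norm_ge) auto
qed

lemma alpha_nn: "0 \<le> alpha_l \<theta> \<omega>0 lam nl l"
proof -
  have "(0::real) \<in> {-pi..pi}" by simp
  from alpha_bound[OF this, of lam nl l] show ?thesis by linarith
qed
lemma gamma_nn: "0 \<le> gamma_l \<theta> \<omega>0 lam nl l"
proof -
  have "(0::real) \<in> {-pi..pi}" by simp
  from gamma_bound[OF this, of lam nl l] show ?thesis by linarith
qed

end

context meyer begin

abbreviation "mm lam nl l \<equiv> mask_m \<theta> \<omega>0 lam nl l"
abbreviation "al lam nl l \<equiv> alpha_l \<theta> \<omega>0 lam nl l"
abbreviation "ga lam nl l \<equiv> gamma_l \<theta> \<omega>0 lam nl l"

lemma pi3: "3 < pi" by (rule less_le_trans[OF _ pi_approx(1)]) simp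

lemma C0: "C l 0 = 1" by (simp add: C_def)

lemma M0: "M l 0 = 1"
proof -
  have a: "M l 0 = F l 0" by (rule M_F) simp
  have "0 \<le> \<omega>0" using om1 pi_gt_zero by linarith
  then have "phi 0 = 1" using phi_one[of 0] by simp
  then have "F l 0 = 1" by (simp add: F_def P_phi C0)
  then show ?thesis using a by simp
qed

lemma mm_eq: "mm lam nl l x = C l x * U lam nl l x / U lam nl l 0"
  by (simp add: mask_m_def C_def)

lemma F4: assumes nz: "U lam nl l 0 \<noteq> 0"
  shows "\<bar>mm lam nl l x - mk x\<bar> \<le> 2 * al lam nl l / \<bar>U lam nl l 0\<bar>"
proof -
  obtain n where n: "red2pi x = x - 2*pi* of_int n" using red_form by blast
  define y where "y = red2pi x"
  have yr: "y \<in> {-pi..pi}" using red_range[of x] by (auto simp: y_def)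
  have "mm lam nl l x = mm lam nl l y"
    unfolding mm_eq y_def n by (simp add: C_per U_per)
  moreover have "mk x = mk y"
    using red_range[of x] by (simp add: mk_red y_def red_id)
  ultimately have e1: "mm lam nl l x - mk x = mm lam nl l y - mk y" by simp
  define c0 where "c0 = U lam nl l 0"
  define a where "a = al lam nl l"
  have hy: "\<bar>U lam nl l y - M l y\<bar> \<le> a" using alpha_bound[OF yr] by (simp add: a_def)
  have h0: "\<bar>c0 - 1\<bar> \<le> a" using alpha_bound[of 0 lam nl l] by (simp add: c0_def a_def M0)
  have cm: "mk y = C l y * M l y" by (rule mk_CM)
  have e2: "mm lam nl l y - mk y = (C l y * (U lam nl l y - M l y) + mk y * (1 - c0)) / c0"
    using nz unfolding mm_eq cm c0_def by (simp add: field_simps)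
  have cb: "0 \<le> C l y" "C l y \<le> 1" using C_bd by auto
  have mb: "0 \<le> mk y" "mk y \<le> 1" using mk_bd by auto
  have "\<bar>C l y * (U lam nl l y - M l y)\<bar> \<le> 1 * a"
    unfolding abs_mult using cb hy by (intro mult_mono) auto
  moreover have "\<bar>mk y * (1 - c0)\<bar> \<le> 1 * a"
    unfolding abs_mult using mb h0 by (intro mult_mono) auto
  ultimately have "\<bar>C l y * (U lam nl l y - M l y) + mk y * (1 - c0)\<bar> \<le> 2 * a" by linarith
  then have "\<bar>C l y * (U lam nl l y - M l y) + mk y * (1 - c0)\<bar> / \<bar>c0\<bar> \<le> 2 * a / \<bar>c0\<bar>"
    by (intro divide_right_mono) auto
  then show ?thesis using e1 e2 by (simp add: c0_def a_def)
qed

lemma Cd_bd: "\<bar>Cd l t\<bar> \<le> real l"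
proof -
  have "0 \<le> 1 + cos t" "1 + cos t \<le> 2" using cos_ge_minus_one[of t] cos_le_one[of t] by linarith+
  then have b: "0 \<le> (1 + cos t)/2" "(1 + cos t)/2 \<le> 1" by simp_all
  have p: "\<bar>((1 + cos t)/2)^(l-1)\<bar> \<le> 1" using b by (simp add: power_le_one)
  have s: "\<bar>- sin t / 2\<bar> \<le> 1" using abs_sin_le_one[of t] by (simp; linarith)
  have "\<bar>Cd l t\<bar> = real l * (\<bar>((1 + cos t)/2)^(l-1)\<bar> * \<bar>- sin t / 2\<bar>)"
    by (simp add: Cd_def abs_mult)
  also have "\<dots> \<le> real l * (1 * 1)"
    by (intro mult_left_mono mult_mono p s) auto
  finally show ?thesis by simp
qed

lemma CM_deriv0: assumes t: "\<bar>t\<bar> < \<omega>0"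
  shows "Cd l t * M l t + C l t * DM l t = 0"
proof -
  have tp: "\<bar>t\<bar> \<le> pi" using t om2 by simp
  have d1: "((\<lambda>t. C l t * M l t) has_real_derivative Cd l t * M l t + C l t * DM l t) (at t)"
    using DERIV_mult[OF C_deriv[of l t] M_deriv[OF tp, of l]] by (simp add: algebra_simps)
  have one: "C l s * M l s = 1" if "s \<in> {-\<omega>0<..<\<omega>0}" for s
  proof -
    have "\<bar>s\<bar> < \<omega>0" using that by auto
    then have "mk s = phi (2*(s - 2*pi* of_int 0))" using om2 by (intro maskP) auto
    then have "mk s = 1" using \<open>\<bar>s\<bar> < \<omega>0\<close> by (simp add: phi_one)
    then show ?thesis using mk_CM[of s l] by simp
  qed
  have d0: "((\<lambda>t. C l t * M l t) has_real_derivative 0) (at t)"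
    by (rule has_field_derivative_transform_within_open[of "\<lambda>_. 1" 0 t "{-\<omega>0<..<\<omega>0}"])
       (use t one in auto)
  show ?thesis using DERIV_unique[OF d1 d0] .
qed

lemma F5: assumes x: "\<bar>x\<bar> \<le> 1" and nz: "U lam nl l 0 \<noteq> 0"
  shows "\<bar>mm lam nl l x - 1\<bar> \<le> (real l * al lam nl l + ga lam nl l) * \<bar>x\<bar> / \<bar>U lam nl l 0\<bar>"
proof -
  define w where "w t = C l t * U lam nl l t" for t
  define w' where "w' t = Cd l t * U lam nl l t + C l t * U1 lam nl l t" for t
  define mu where "mu = real l * al lam nl l + ga lam nl l"
  have wd: "(w has_real_derivative w' t) (at t)" for t
    unfolding w_def[abs_def] w'_def using DERIV_mult[OF C_deriv[of l t] U_deriv[of lam nl l t]] by (simp add: algebra_simps)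
  have wb: "\<bar>w' t\<bar> \<le> mu" if "\<bar>t\<bar> \<le> 1" for t
  proof -
    have t0: "\<bar>t\<bar> < \<omega>0" using that om1 pi3 by linarith
    have tp: "t \<in> {-pi..pi}" using that pi3 by auto
    have "w' t = Cd l t * (U lam nl l t - M l t) + C l t * (U1 lam nl l t - DM l t)
         + (Cd l t * M l t + C l t * DM l t)"
      by (simp add: w'_def algebra_simps)
    then have e: "w' t = Cd l t * (U lam nl l t - M l t) + C l t * (U1 lam nl l t - DM l t)"
      using CM_deriv0[OF t0] by simp
    have a1: "\<bar>Cd l t * (U lam nl l t - M l t)\<bar> \<le> real l * al lam nl l"
      unfolding abs_mult by (intro mult_mono Cd_bd alpha_bound tp) auto
    have a2: "\<bar>C l t * (U1 lam nl l t - DM l t)\<bar> \<le> 1 * ga lam nl l"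
      unfolding abs_mult using C_bd[of l t] gamma_bound[OF tp, of lam nl l] deriv_M[OF tp]
      by (intro mult_mono) auto
    show ?thesis unfolding e mu_def using a1 a2 by linarith
  qed
  have mvt: "\<bar>w x - w 0\<bar> \<le> mu * \<bar>x\<bar>"
  proof (cases "x = 0")
    case True then show ?thesis by simp
  next
    case False
    show ?thesis
    proof (cases "x > 0")
      case True
      obtain z where z: "0 < z" "z < x" "w x - w 0 = (x - 0) * w' z"
        using MVT2[OF True, of w w'] wd by blast
      have "\<bar>w' z\<bar> \<le> mu" using z x by (intro wb) auto
      then show ?thesis using z True by (simp add: abs_mult mult.commute mult_left_mono)
    next
      case F: False
      then have xn: "x < 0" using False by simp
      obtain z where z: "x < z" "z < 0" "w 0 - w x = (0 - x) * w' z"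
        using MVT2[OF xn, of w w'] wd by blast
      have "\<bar>w' z\<bar> \<le> mu" using z x by (intro wb) auto
      moreover have "\<bar>w x - w 0\<bar> = (- x) * \<bar>w' z\<bar>" using z xn
        by (simp add: abs_mult abs_minus_commute)
      ultimately show ?thesis using xn by (simp add: mult.commute mult_left_mono)
    qed
  qed
  have "mm lam nl l x - 1 = (w x - w 0) / U lam nl l 0"
    using nz by (simp add: mm_eq w_def C0 field_simps)
  then have "\<bar>mm lam nl l x - 1\<bar> = \<bar>w x - w 0\<bar> / \<bar>U lam nl l 0\<bar>" by simp
  also have "\<dots> \<le> mu * \<bar>x\<bar> / \<bar>U lam nl l 0\<bar>" by (intro divide_right_mono mvt) auto
  finally show ?thesis by (simp add: mu_def)
qed

end

lemma sum_ind: "(\<Sum>j<N. if j < J then (x::real) else 0) = x * real (min N J)"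
  by (induction N) (auto simp: min_def algebra_simps)

lemma sum_geo: "(\<Sum>j<N. 1 / (2::real) ^ Suc j) = 1 - 1 / 2 ^ N"
  by (induction N) (auto simp: field_simps)

context meyer begin

lemma pointwise:
  assumes nz: "U lam nl l 0 \<noteq> 0" and c: "0 < c" "c \<le> \<bar>U lam nl l 0\<bar>"
    and R: "\<bar>w\<bar> \<le> R" and J: "R \<le> 2^J" and l1: "1 \<le> l"
    and mu1: "real l * al lam nl l + ga lam nl l \<le> 1"
  shows "\<bar>phi_hat_l \<theta> \<omega>0 lam nl l w - phi w\<bar> \<le>
    ((2 * real J + R) / c) * exp ((2 * real J + R) / c) * (real l * al lam nl l + ga lam nl l)"
proof -
  define a where "a = al lam nl l"
  define mu where "mu = real l * al lam nl l + ga lam nl l"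
  define K where "K = (2 * real J + R) / c"
  define c0 where "c0 = U lam nl l 0"
  define p where "p j = mm lam nl l (w / 2^(Suc j))" for j
  define q where "q j = mk (w / 2^(Suc j))" for j
  define e where "e j = (if j < J then 2*a/c else 0) + mu*R/(c * 2^(Suc j))" for j
  have a0: "0 \<le> a" using alpha_nn by (simp add: a_def)
  have g0: "0 \<le> ga lam nl l" using gamma_nn by simp
  have R0: "0 \<le> R" using R by linarith
  have "1 * a \<le> real l * a" by (rule mult_right_mono) (use l1 a0 in auto)
  then have amu: "a \<le> mu" unfolding mu_def using g0 by (simp add: a_def)
  have mu0: "0 \<le> mu" using a0 amu by linarith
  have K0: "0 \<le> K" unfolding K_def using c R0 by auto
  have qb: "\<bar>q j\<bar> \<le> 1" for j using mk_bd[of "w / 2^(Suc j)"] by (simp add: q_def)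
  have xs: "\<bar>w / 2^(Suc j)\<bar> \<le> R / 2^(Suc j)" for j
    using R by (simp add: divide_right_mono)
  have small: "\<bar>w / 2^(Suc j)\<bar> \<le> 1/2" if "J \<le> j" for j
  proof -
    have "(2::real)^J \<le> 2^j" using that by (intro power_increasing) auto
    then have "R \<le> 2^j" using J by linarith
    then have "R / 2^(Suc j) \<le> 2^j / 2^(Suc j)" by (intro divide_right_mono) auto
    also have "\<dots> = 1/2" by simp
    finally show ?thesis using xs[of j] by linarith
  qed
  have q1: "q j = 1" if "J \<le> j" for j
  proof -
    define x where "x = w / 2^(Suc j)"
    have "\<bar>x\<bar> \<le> 1/2" using small[OF that] by (simp add: x_def)
    then have "mk x = phi (2*(x - 2*pi* of_int 0))" using pi3 by (intro maskP) auto
    also have "\<dots> = 1" using \<open>\<bar>x\<bar> \<le> 1/2\<close> om1 pi3 by (intro phi_one) auto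
    finally show ?thesis by (simp add: q_def x_def)
  qed
  have pq_tail: "\<bar>p j - 1\<bar> \<le> mu*R/(c * 2^(Suc j))" if "J \<le> j" for j
  proof -
    define x where "x = w / 2^(Suc j)"
    have x1: "\<bar>x\<bar> \<le> 1" using small[OF that] by (simp add: x_def)
    have "\<bar>p j - 1\<bar> \<le> mu * \<bar>x\<bar> / \<bar>c0\<bar>"
      using F5[OF x1 nz] by (simp add: p_def x_def mu_def c0_def)
    also have "\<dots> \<le> mu * \<bar>x\<bar> / c" using c mu0 by (intro divide_left_mono) (auto simp: c0_def)
    also have "\<dots> \<le> mu * (R / 2^(Suc j)) / c"
      using xs[of j] mu0 c by (intro divide_right_mono mult_left_mono) (auto simp: x_def)
    finally show ?thesis by (simp add: mult_ac)
  qed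
  have pq: "\<bar>p j - q j\<bar> \<le> e j" for j
  proof (cases "j < J")
    case True
    have "\<bar>p j - q j\<bar> \<le> 2 * a / \<bar>c0\<bar>" using F4[OF nz] by (simp add: p_def q_def a_def c0_def)
    also have "\<dots> \<le> 2 * a / c" using c a0 by (intro divide_left_mono) (auto simp: c0_def)
    also have "\<dots> \<le> e j" using True mu0 R0 c by (simp add: e_def)
    finally show ?thesis .
  next
    case False
    then show ?thesis using pq_tail[of j] q1[of j] by (simp add: e_def)
  qed
  have e0: "0 \<le> e j" for j using pq[of j] by linarith
  have sumb: "(\<Sum>j<N. e j) \<le> K * mu" for N
  proof -
    have "(\<Sum>j<N. e j) = (\<Sum>j<N. if j < J then 2*a/c else 0) + (mu*R/c) * (\<Sum>j<N. 1 / 2^(Suc j))"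
      by (simp add: e_def sum.distrib sum_distrib_left)
    also have "\<dots> = 2*a/c * real (min N J) + (mu*R/c) * (1 - 1/2^N)"
      by (simp only: sum_ind sum_geo)
    also have "\<dots> \<le> 2*mu/c * real J + (mu*R/c) * 1"
    proof (intro add_mono mult_mono)
      show "2*a/c \<le> 2*mu/c" using amu c by (intro divide_right_mono) auto
    qed (use a0 mu0 R0 c in auto)
    also have "\<dots> = K * mu" by (simp add: K_def add_divide_distrib algebra_simps)
    finally show ?thesis .
  qed
  have pbound: "\<bar>(\<Prod>j<N. p j) - (\<Prod>j<N. q j)\<bar> \<le> K * exp K * mu" for N
  proof -
    have "\<bar>(\<Prod>j<N. p j) - (\<Prod>j<N. q j)\<bar> \<le> (\<Prod>j<N. 1 + e j) - 1" by (rule prod_diff[OF qb pq])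
    also have "\<dots> \<le> exp (\<Sum>j<N. e j) - 1" using prod_exp[OF e0] by simp
    also have "\<dots> \<le> exp (K * mu) - 1" using sumb by simp
    also have "\<dots> \<le> (K * mu) * exp (K * mu)" using K0 mu0 by (intro exp_minus_one) simp
    also have "\<dots> \<le> (K * mu) * exp K" using K0 mu0 mu1
      by (intro mult_left_mono) (auto simp: mu_def mult_left_le)
    finally show ?thesis by (simp add: algebra_simps)
  qed
  have qprod: "(\<Prod>j<N. q j) = phi w" if "J \<le> N" for N
  proof -
    have "\<bar>w / 2^N\<bar> \<le> 1"
    proof -
      have "(2::real)^J \<le> 2^N" using that by (intro power_increasing) auto
      then have "\<bar>w\<bar> \<le> 2^N" using R J by linarith
      then show ?thesis by (simp add: divide_le_eq_1)
    qed
    moreover have "1 \<le> 2*\<omega>0" using om1 pi3 by linarith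
    ultimately have "phi (w / 2^N) = 1" by (intro phi_one) linarith
    then show ?thesis using phi_partial[of w N] by (simp add: q_def)
  qed
  have "summable (\<lambda>j. norm (p j - 1))"
  proof (rule summable_comparison_test'[where N = J])
    show "summable (\<lambda>j. (mu*R/(2*c)) * (1/2)^j)"
      by (intro summable_mult summable_geometric) simp
    show "norm (norm (p j - 1)) \<le> (mu*R/(2*c)) * (1/2)^j" if "J \<le> j" for j
      using pq_tail[OF that] by (simp add: power_divide field_simps)
  qed
  then have "convergent_prod p"
    by (intro abs_convergent_prod_imp_convergent_prod) (simp add: abs_convergent_prod_conv_summable)
  then have lim: "(\<lambda>n. \<Prod>i\<le>n. p i) \<longlonglongrightarrow> prodinf p" by (rule convergent_prod_LIMSEQ)
  have "p = (\<lambda>j. mm lam nl l (w / 2^(Suc j)))" by (rule ext) (simp add: p_def)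
  then have ph: "phi_hat_l \<theta> \<omega>0 lam nl l w = prodinf p" by (simp only: phi_hat_l_def)
  have "(\<lambda>n. \<bar>(\<Prod>i\<le>n. p i) - phi w\<bar>) \<longlonglongrightarrow> \<bar>prodinf p - phi w\<bar>"
    by (intro tendsto_intros lim)
  moreover have "\<exists>N. \<forall>n\<ge>N. \<bar>(\<Prod>i\<le>n. p i) - phi w\<bar> \<le> K * exp K * mu"
  proof (intro exI allI impI)
    fix n assume "J \<le> n"
    then have "(\<Prod>j<Suc n. q j) = phi w" by (intro qprod) simp
    then show "\<bar>(\<Prod>i\<le>n. p i) - phi w\<bar> \<le> K * exp K * mu"
      using pbound[of "Suc n"] by (simp add: lessThan_Suc_atMost)
  qed
  ultimately have "\<bar>prodinf p - phi w\<bar> \<le> K * exp K * mu" by (rule LIMSEQ_le_const2)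
  then show ?thesis by (simp add: ph K_def mu_def)
qed

end


theorem lemma3:
  fixes \<theta> :: "real \<Rightarrow> real" and \<omega>0 :: real
    and lam :: "nat \<Rightarrow> nat \<Rightarrow> real" and nl :: "nat \<Rightarrow> nat" and l0 :: nat
    and a b :: real
  assumes theta_odd: "\<forall>x. \<theta> (- x) = - \<theta> x"
    and theta_mono: "mono \<theta>"
    and theta_C2: "C2_fun \<theta>"
    and theta_const: "\<forall>x. x > pi / 3 \<longrightarrow> \<theta> x = pi / 4"
    and omega0: "pi / 3 \<le> \<omega>0" "\<omega>0 < pi / 2"
    and alpha_small: "(\<lambda>l. real l * alpha_l \<theta> \<omega>0 lam nl l) \<longlonglongrightarrow> 0"
    and gamma_small: "gamma_l \<theta> \<omega>0 lam nl \<longlonglongrightarrow> 0"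
    and u_pi: "\<forall>l\<ge>l0. u_l \<theta> \<omega>0 lam nl l pi \<noteq> 0"
    and u_0: "\<exists>c>0. \<forall>l\<ge>l0. \<bar>u_l \<theta> \<omega>0 lam nl l 0\<bar> \<ge> c"
    and ab: "a < b"
  shows "(\<lambda>l. sup_norm_on {a..b} (\<lambda>\<omega>. phi_hat_l \<theta> \<omega>0 lam nl l \<omega> - meyer_phi_hat \<theta> \<omega>0 \<omega>))
           \<in> O(mu_l \<theta> \<omega>0 lam nl)"
proof -
  obtain \<theta>1 \<theta>2 where d1: "\<forall>x. (\<theta> has_real_derivative \<theta>1 x) (at x)"
    and d2: "\<forall>x. (\<theta>1 has_real_derivative \<theta>2 x) (at x)"
    using theta_C2 unfolding C2_fun_def by blast
  interpret meyer \<theta> \<omega>0 \<theta>1 \<theta>2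
    using theta_odd theta_mono d1 d2 theta_const omega0 by unfold_locales auto
  obtain c where c: "c > 0" "\<And>l. l \<ge> l0 \<Longrightarrow> \<bar>u_l \<theta> \<omega>0 lam nl l 0\<bar> \<ge> c" using u_0 by blast
  define R where "R = max \<bar>a\<bar> \<bar>b\<bar>"
  obtain J :: nat where J: "R < 2^J" using real_arch_pow[of 2 R] by auto
  define K where "K = (2 * real J + R) / c"
  have mu_lim: "mu_l \<theta> \<omega>0 lam nl \<longlonglongrightarrow> 0"
  proof -
    have "(\<lambda>l. real l * alpha_l \<theta> \<omega>0 lam nl l + gamma_l \<theta> \<omega>0 lam nl l) \<longlonglongrightarrow> 0 + 0"
      by (intro tendsto_add alpha_small gamma_small)
    then show ?thesis by (simp add: mu_l_def[abs_def])
  qed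
  have ev1: "eventually (\<lambda>l. mu_l \<theta> \<omega>0 lam nl l < 1) sequentially"
    using order_tendstoD(2)[OF mu_lim, of 1] by simp
  have ev2: "eventually (\<lambda>l. l \<ge> max l0 1) sequentially" by (rule eventually_ge_at_top)
  show ?thesis
  proof (rule bigoI[where c = "K * exp K"])
    show "eventually (\<lambda>l. norm (sup_norm_on {a..b} (\<lambda>\<omega>. phi_hat_l \<theta> \<omega>0 lam nl l \<omega> - meyer_phi_hat \<theta> \<omega>0 \<omega>))
          \<le> K * exp K * norm (mu_l \<theta> \<omega>0 lam nl l)) sequentially"
      using ev1 ev2
    proof eventually_elim
      case (elim l)
      have ll0: "l \<ge> l0" and l1: "1 \<le> l" using elim(2) by auto
      have cl: "c \<le> \<bar>U lam nl l 0\<bar>" using c(2)[OF ll0] .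
      then have nz: "U lam nl l 0 \<noteq> 0" using c(1) by auto
      have mu_eq: "mu_l \<theta> \<omega>0 lam nl l = real l * al lam nl l + ga lam nl l" by (simp add: mu_l_def)
      have mu0: "0 \<le> mu_l \<theta> \<omega>0 lam nl l" unfolding mu_eq using alpha_nn gamma_nn by simp
      have pw: "\<bar>phi_hat_l \<theta> \<omega>0 lam nl l w - meyer_phi_hat \<theta> \<omega>0 w\<bar> \<le> K * exp K * mu_l \<theta> \<omega>0 lam nl l"
        if "w \<in> {a..b}" for w
      proof -
        have "\<bar>w\<bar> \<le> R" using that by (auto simp: R_def)
        from pointwise[OF nz c(1) cl this less_imp_le[OF J] l1] elim(1)
        show ?thesis by (simp add: K_def mu_eq)
      qed
      have up: "sup_norm_on {a..b} (\<lambda>\<omega>. phi_hat_l \<theta> \<omega>0 lam nl l \<omega> - meyer_phi_hat \<theta> \<omega>0 \<omega>) \<le> K * exp K * mu_l \<theta> \<omega>0 lam nl l"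
        using ab pw by (intro sup_norm_le) auto
      have "\<bar>phi_hat_l \<theta> \<omega>0 lam nl l a - meyer_phi_hat \<theta> \<omega>0 a\<bar> \<le> sup_norm_on {a..b} (\<lambda>\<omega>. phi_hat_l \<theta> \<omega>0 lam nl l \<omega> - meyer_phi_hat \<theta> \<omega>0 \<omega>)"
        using ab by (intro sup_norm_ge[OF pw]) auto
      then have lo: "0 \<le> sup_norm_on {a..b} (\<lambda>\<omega>. phi_hat_l \<theta> \<omega>0 lam nl l \<omega> - meyer_phi_hat \<theta> \<omega>0 \<omega>)"
        by linarith
      show ?case using up lo mu0 by simp
    qed
  qed
qed


end
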